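(* Let $d\geq 2$ and $k\geq 1$. For every simplicial complex $\mathsf{X}^d_k$ constructed as below (with any choices), $\mathsf{X}^d_k$ has $k(d+2)$ vertices, $\tau(\mathcal{F}(\mathsf{X}^d_k))=2k$, and no transversal of $\mathcal{F}(\mathsf{X}^d_k)$ of size $2k$ contains all vertices of a facet of $\mathsf{X}^d_k$ that contains the apex vertex of $\mathsf{X}^d_k$.
   Context: Connected sum: for PL $d$-spheres $\mathsf{K}_1,\mathsf{K}_2$, facets $f_i$ of $\mathsf{K}_i$ and a bijection $\psi:f_1\to f_2$, $\mathsf{K}_1\#_\psi\mathsf{K}_2=\big((\mathsf{K}_1\setminus\{f_1\})\sqcup(\mathsf{K}_2\setminus\{f_2\})\big)/\sim_\psi$, identifying every proper subface $g_1$ of $f_1$ with $\psi(g_1)$. Let $\mathsf{S}^d$ be the boundary complex of the abstract $(d+1)$-simplex on $d+2$ vertices, and $\mathsf{C}^d=\mathsf{S}^0*\cdots*\mathsf{S}^0$ ($(d+1)$-fold join) the boundary complex of the $(d+1)$-dimensional cross polytope, with its antipodal involution on vertices; the antipodal facet of a facet $f$ of $\mathsf{C}^d$ is the set of antipodes of its vertices. Let $\mathsf{C}^d_+=\mathsf{C}^d\#_{\psi_S}\mathsf{S}^d$ for a facet $f$ of $\mathsf{C}^d$, a facet $g$ of $\mathsf{S}^d$ and a bijection $\psi_S:f\to g$; its apex vertex is the vertex of $\mathsf{S}^d$ not in $g$, and its base facet is the facet of $\mathsf{C}^d$ antipodal to $f$. Define $\mathsf{X}^d_1=\mathsf{S}^d$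 with an arbitrary vertex chosen as apex vertex. For $k\geq 2$, $\mathsf{X}^d_k=\mathsf{X}^d_{k-1}\#_{\psi_k}\mathsf{C}^d_+$ where $\psi_k$ is any bijection from a facet $f_{k-1}$ of $\mathsf{X}^d_{k-1}$ containing the apex vertex of $\mathsf{X}^d_{k-1}$ to the base facet of $\mathsf{C}^d_+$; the apex vertex of $\mathsf{X}^d_k$ is the apex vertex of this copy of $\mathsf{C}^d_+$. $\mathcal{F}(\cdot)$ is the facet hypergraph and $\tau$ the minimum size of a vertex set meeting all facets (a transversal). *)

theory Defs
  imports Main
begin

text \<open>A simplicial complex (here always a pure one, e.g. a PL sphere) is represented by its
  facet hypergraph: a set of facets, each a finite vertex set. Its vertex set is the union
  of its facets.\<close>

definition vertices :: "'v set set \<Rightarrow> 'v set" where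
  "vertices F = \<Union> F"

definition simplex_bd :: "'v set \<Rightarrow> 'v set set" where
  "simplex_bd W = {W - {w} | w. w \<in> W}"

text \<open>Boundary complex of the cross polytope, i.e. the join of the 0-spheres {v, s v},
  on vertex set V with fixed-point-free antipodal involution s: a facet picks exactly one
  vertex from each antipodal pair.\<close>
definition is_cross_data :: "nat \<Rightarrow> 'v set \<Rightarrow> ('v \<Rightarrow> 'v) \<Rightarrow> bool" where
  "is_cross_data d V s \<longleftrightarrow> finite V \<and> card V = 2 * (d + 1) \<and> s ` V \<subseteq> V \<and>
     (\<forall>v\<in>V. s v \<noteq> v \<and> s (s v) = v)"

definition cross_facets :: "'v set \<Rightarrow> ('v \<Rightarrow> 'v) \<Rightarrow> 'v set set" where
  "cross_facets V s = {f. f \<subseteq> V \<and> (\<forall>v\<in>V. (v \<in> f) \<noteq> (s v \<in> f))}"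

text \<open>Connected sum of (the facet hypergraphs of) two complexes with disjoint vertex sets
  along facets f1, f2 and a bijection psi : f1 \<rightarrow> f2: remove f1 and f2 and identify every
  vertex v of f2 with psi^{-1}(v).\<close>
definition consum :: "'v set set \<Rightarrow> 'v set set \<Rightarrow> 'v set \<Rightarrow> 'v set \<Rightarrow> ('v \<Rightarrow> 'v) \<Rightarrow> 'v set set" where
  "consum F1 F2 f1 f2 psi =
     (F1 - {f1}) \<union> (\<lambda>g. (\<lambda>v. if v \<in> f2 then inv_into f1 psi v else v) ` g) ` (F2 - {f2})"

definition consum_ok :: "'v set set \<Rightarrow> 'v set set \<Rightarrow> 'v set \<Rightarrow> 'v set \<Rightarrow> ('v \<Rightarrow> 'v) \<Rightarrow> bool" where
  "consum_ok F1 F2 f1 f2 psi \<longleftrightarrow> vertices F1 \<inter> vertices F2 = {} \<and> f1 \<in> F1 \<and> f2 \<in> F2 \<and>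
     bij_betw psi f1 f2"

text \<open>C^d_+ with apex vertex b and base facet base: obtained as C^d #_{psi_S} S^d for any
  facet f of C^d, facet g of S^d, bijection psi_S : f \<rightarrow> g; apex = vertex of S^d not in g;
  base facet = antipodal facet of f.\<close>
definition is_cplus :: "nat \<Rightarrow> 'v set set \<Rightarrow> 'v \<Rightarrow> 'v set \<Rightarrow> bool" where
  "is_cplus d G b base \<longleftrightarrow>
    (\<exists>V s W f g psiS. is_cross_data d V s \<and> finite W \<and> card W = d + 2 \<and>
       consum_ok (cross_facets V s) (simplex_bd W) f g psiS \<and>
       b \<in> W - g \<and> base = s ` f \<and>
       G = consum (cross_facets V s) (simplex_bd W) f g psiS)"

inductive is_X :: "nat \<Rightarrow> nat \<Rightarrow> 'v set set \<Rightarrow> 'v \<Rightarrow> bool" where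
  base: "finite W \<Longrightarrow> card W = d + 2 \<Longrightarrow> a \<in> W \<Longrightarrow> is_X d 1 (simplex_bd W) a"
| step: "is_X d k F a \<Longrightarrow> is_cplus d G b bs \<Longrightarrow> consum_ok F G f bs psi \<Longrightarrow> a \<in> f \<Longrightarrow>
         is_X d (Suc k) (consum F G f bs psi) b"

definition is_transversal :: "'v set set \<Rightarrow> 'v set \<Rightarrow> bool" where
  "is_transversal H T \<longleftrightarrow> T \<subseteq> vertices H \<and> (\<forall>e\<in>H. T \<inter> e \<noteq> {})"

definition tau :: "'v set set \<Rightarrow> nat" where
  "tau H = (LEAST n. \<exists>T. finite T \<and> card T = n \<and> is_transversal H T)"

end

theory Submission
  imports Defs
begin



lemma cross_basic:
  assumes cd: "is_cross_data d V s" and fC: "f \<in> cross_facets V s"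
  shows "f \<subseteq> V" "f \<inter> s`f = {}" "V = f \<union> s`f" "inj_on s V" "card f = d+1" "finite f"
    "s`f \<in> cross_facets V s"
proof -
  have V: "finite V" "card V = 2*(d+1)" "s`V \<subseteq> V" "\<And>v. v\<in>V \<Longrightarrow> s v \<noteq> v \<and> s (s v) = v"
    using cd unfolding is_cross_data_def by auto
  have f: "f \<subseteq> V" "\<And>v. v\<in>V \<Longrightarrow> (v \<in> f) \<noteq> (s v \<in> f)" using fC unfolding cross_facets_def by auto
  show fV: "f \<subseteq> V" by fact
  show disj: "f \<inter> s`f = {}"
  proof (rule ccontr)
    assume "f \<inter> s`f \<noteq> {}"
    then obtain y where "y \<in> f" "s y \<in> f" by auto
    with f show False using fV by auto
  qed
  show Veq: "V = f \<union> s`f"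
  proof
    show "V \<subseteq> f \<union> s`f"
    proof
      fix v assume v: "v \<in> V"
      show "v \<in> f \<union> s`f"
      proof (cases "v \<in> f")
        case False
        then have "s v \<in> f" using f(2)[OF v] by auto
        then have "s (s v) \<in> s`f" by auto
        then show ?thesis using V(4)[OF v] by auto
      qed auto
    qed
    show "f \<union> s`f \<subseteq> V" using fV V(3) by auto
  qed
  show inj: "inj_on s V"
    by (metis V(4) inj_on_def)
  have "card V = card f + card (s`f)" using Veq disj V(1) fV
    by (metis card_Un_disjoint finite_Un)
  moreover have "card (s`f) = card f" using inj fV by (meson card_image inj_on_subset)
  ultimately show "card f = d+1" using V(2) by auto
  show "finite f" using fV V(1) finite_subset by auto
  show "s`f \<in> cross_facets V s"
    unfolding cross_facets_def
  proof (intro CollectI conjI ballI)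
    show "s`f \<subseteq> V" using fV V(3) by auto
    fix v assume v: "v \<in> V"
    have "(v \<in> s`f) = (s v \<in> f)"
    proof
      assume "v \<in> s`f" then obtain y where "y \<in> f" "v = s y" by auto
      then show "s v \<in> f" using V(4) fV by auto
    next
      assume "s v \<in> f" then have "s (s v) \<in> s`f" by auto
      then show "v \<in> s`f" using V(4)[OF v] by auto
    qed
    moreover have "(s v \<in> s`f) = (v \<in> f)"
    proof
      assume "s v \<in> s`f" then obtain y where "y \<in> f" "s v = s y" by auto
      then show "v \<in> f" using inj v fV unfolding inj_on_def by auto
    qed auto
    ultimately show "(v \<in> s`f) \<noteq> (s v \<in> s`f)" using f(2)[OF v] by auto
  qed
qed

lemma cross_decomp:
  assumes cd: "is_cross_data d V s" and fC: "f \<in> cross_facets V s"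
  shows "cross_facets V s - {f, s`f} = (\<lambda>B. B \<union> s`(f-B)) ` {B. B \<subseteq> f \<and> B \<noteq> {} \<and> B \<noteq> f}"
proof -
  note cb = cross_basic[OF cd fC]
  have V: "\<And>v. v\<in>V \<Longrightarrow> s v \<noteq> v \<and> s (s v) = v" "s`V \<subseteq> V"
    using cd unfolding is_cross_data_def by auto
  have hdec: "h = (h \<inter> f) \<union> s`(f - (h\<inter>f))" if hC: "h \<in> cross_facets V s" for h
  proof -
    have h: "h \<subseteq> V" "\<And>v. v\<in>V \<Longrightarrow> (v \<in> h) \<noteq> (s v \<in> h)" using hC unfolding cross_facets_def by auto
    show ?thesis
    proof
      show "h \<subseteq> (h \<inter> f) \<union> s`(f - (h\<inter>f))"
      proof
        fix x assume x: "x \<in> h"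
        then have "x \<in> f \<union> s`f" using h(1) cb(3) by auto
        then show "x \<in> (h \<inter> f) \<union> s`(f - (h\<inter>f))"
        proof
          assume "x \<in> s`f" then obtain y where y: "y \<in> f" "x = s y" by auto
          then have "y \<notin> h" using h(2)[of y] x cb(1) by auto
          then show ?thesis using y by auto
        qed (use x in auto)
      qed
      show "(h \<inter> f) \<union> s`(f - (h\<inter>f)) \<subseteq> h"
      proof
        fix x assume "x \<in> (h \<inter> f) \<union> s`(f - (h\<inter>f))"
        then show "x \<in> h"
        proof
          assume "x \<in> s`(f - (h\<inter>f))" then obtain y where y: "y \<in> f" "y \<notin> h" "x = s y" by auto
          then show ?thesis using h(2)[of y] cb(1) by auto
        qed auto
      qed
    qed
  qed
  have hC: "B \<union> s`(f-B) \<in> cross_facets V s" if B: "B \<subseteq> f" for B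
    unfolding cross_facets_def
  proof (intro CollectI conjI ballI)
    show "B \<union> s ` (f - B) \<subseteq> V" using B cb(1) V(2) by auto
    fix v assume v: "v \<in> V"
    then have "v \<in> f \<or> v \<in> s`f" using cb(3) by auto
    then show "(v \<in> B \<union> s ` (f - B)) \<noteq> (s v \<in> B \<union> s ` (f - B))"
    proof
      assume vf: "v \<in> f"
      then have "v \<notin> s`f" "s v \<notin> f" using cb(2) by auto
      moreover have "(s v \<in> s`(f-B)) = (v \<in> f - B)"
        using cb(4) v cb(1) vf unfolding inj_on_def by blast
      ultimately show ?thesis using B vf by auto
    next
      assume "v \<in> s`f" then obtain y where y: "y \<in> f" "v = s y" by auto
      have sv: "s v = y" using V(1) y cb(1) by auto
      have "v \<notin> f" using cb(2) y by auto
      moreover have "(s y \<in> s`(f-B)) = (y \<in> f - B)"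
        using cb(4) cb(1) y unfolding inj_on_def by blast
      moreover have "y \<notin> s`(f-B)" using cb(2) y by auto
      ultimately show ?thesis using B y sv by auto
    qed
  qed
  show ?thesis
  proof
    show "cross_facets V s - {f, s ` f} \<subseteq> (\<lambda>B. B \<union> s ` (f - B)) ` {B. B \<subseteq> f \<and> B \<noteq> {} \<and> B \<noteq> f}"
    proof
      fix h assume h: "h \<in> cross_facets V s - {f, s ` f}"
      have e: "h = (h \<inter> f) \<union> s`(f - (h\<inter>f))" using hdec h by auto
      have "h \<inter> f \<noteq> {}" using e h by auto
      moreover have "h \<inter> f \<noteq> f" using e h by auto
      ultimately show "h \<in> (\<lambda>B. B \<union> s ` (f - B)) ` {B. B \<subseteq> f \<and> B \<noteq> {} \<and> B \<noteq> f}"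
        using e by blast
    qed
    show "(\<lambda>B. B \<union> s ` (f - B)) ` {B. B \<subseteq> f \<and> B \<noteq> {} \<and> B \<noteq> f} \<subseteq> cross_facets V s - {f, s ` f}"
    proof
      fix h assume "h \<in> (\<lambda>B. B \<union> s ` (f - B)) ` {B. B \<subseteq> f \<and> B \<noteq> {} \<and> B \<noteq> f}"
      then obtain B where B: "B \<subseteq> f" "B \<noteq> {}" "B \<noteq> f" "h = B \<union> s`(f-B)" by auto
      have "h \<noteq> f"
      proof
        assume "h = f"
        obtain y where "y \<in> f" "y \<notin> B" using B by auto
        then have "s y \<in> f" using B `h = f` by auto
        then show False using cb(2) `y \<in> f` by auto
      qed
      moreover have "h \<noteq> s`f"
      proof
        assume "h = s`f"
        obtain x where "x \<in> B" using B by auto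
        then show False using B \<open>h = s`f\<close> cb(2) by blast
      qed
      ultimately show "h \<in> cross_facets V s - {f, s ` f}" using hC B by auto
    qed
  qed
qed




lemma simplex_vertices:
  assumes "finite W" "2 \<le> card W"
  shows "vertices (simplex_bd W) = W"
proof
  show "vertices (simplex_bd W) \<subseteq> W" unfolding vertices_def simplex_bd_def by auto
  show "W \<subseteq> vertices (simplex_bd W)"
  proof
    fix v assume v: "v \<in> W"
    have "W - {v} \<noteq> {}"
    proof
      assume "W - {v} = {}" then have "W \<subseteq> {v}" by auto
      then have "card W \<le> card {v}" by (intro card_mono) auto
      then have "card W \<le> 1" by simp
      then show False using assms by auto
    qed
    then obtain w where w: "w \<in> W" "w \<noteq> v" by auto
    then have "W - {w} \<in> simplex_bd W" unfolding simplex_bd_def by auto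
    then show "v \<in> vertices (simplex_bd W)" unfolding vertices_def using v w by blast
  qed
qed

lemma cplus_struct:
  assumes "is_cplus d G b bs" "d \<ge> 1"
  shows "\<exists>V s f. is_cross_data d V s \<and> f \<in> cross_facets V s \<and> b \<notin> V \<and> bs = s`f \<and>
    G = (cross_facets V s - {f}) \<union> (\<lambda>x. insert b (f - {x})) ` f"
proof -
  obtain V s W f g psiS where cd: "is_cross_data d V s" and W: "finite W" "card W = d + 2"
    and ok: "consum_ok (cross_facets V s) (simplex_bd W) f g psiS"
    and b: "b \<in> W - g" and bs: "bs = s ` f"
    and G: "G = consum (cross_facets V s) (simplex_bd W) f g psiS"
    using assms(1) unfolding is_cplus_def by blast
  have disj: "vertices (cross_facets V s) \<inter> vertices (simplex_bd W) = {}"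
    and fC: "f \<in> cross_facets V s" and gS: "g \<in> simplex_bd W" and psi: "bij_betw psiS f g"
    using ok unfolding consum_ok_def by blast+
  note cb = cross_basic[OF cd fC]
  have VW: "V \<subseteq> vertices (cross_facets V s)"
  proof
    fix v assume "v \<in> V"
    then have "v \<in> f \<union> s`f" using cb(3) by simp
    then have "v \<in> f \<or> v \<in> s`f" by simp
    then show "v \<in> vertices (cross_facets V s)" unfolding vertices_def using fC cb(7) by blast
  qed
  have "vertices (simplex_bd W) = W" by (rule simplex_vertices) (use W in auto)
  then have "b \<in> vertices (simplex_bd W)" using b by simp
  then have bV: "b \<notin> V" using VW disj by blast
  obtain w0 where w0: "w0 \<in> W" "g = W - {w0}" using gS unfolding simplex_bd_def by blast
  have bw: "b = w0" using b w0 by simp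
  have Sg: "simplex_bd W - {g} = (\<lambda>w. W - {w}) ` g"
  proof
    show "simplex_bd W - {g} \<subseteq> (\<lambda>w. W - {w}) ` g"
    proof
      fix h assume h: "h \<in> simplex_bd W - {g}"
      then obtain w where w: "w \<in> W" "h = W - {w}" unfolding simplex_bd_def by blast
      have "w \<noteq> b"
      proof
        assume "w = b" then have "h = g" using w w0 bw by simp
        then show False using h by simp
      qed
      then have "w \<in> g" using w w0 bw by simp
      then show "h \<in> (\<lambda>w. W - {w}) ` g" using w by blast
    qed
    show "(\<lambda>w. W - {w}) ` g \<subseteq> simplex_bd W - {g}"
    proof
      fix h assume "h \<in> (\<lambda>w. W - {w}) ` g"
      then obtain w where w: "w \<in> g" "h = W - {w}" by auto
      have "b \<in> h" using w w0 bw b by auto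
      then have "h \<noteq> g" using b by auto
      then show "h \<in> simplex_bd W - {g}" using w w0 unfolding simplex_bd_def by blast
    qed
  qed
  define \<iota> where "\<iota> = (\<lambda>v. if v \<in> g then inv_into f psiS v else v)"
  have ib: "bij_betw (inv_into f psiS) g f" using psi by (rule bij_betw_inv_into)
  have img: "(\<lambda>h. \<iota> ` h) (W - {w}) = insert b (f - {inv_into f psiS w})" if w: "w \<in> g" for w
  proof -
    have e: "W - {w} = insert b (g - {w})" using w w0 bw by auto
    have "\<iota> ` (g - {w}) = inv_into f psiS ` (g - {w})" unfolding \<iota>_def by (rule image_cong) auto
    also have "\<dots> = f - {inv_into f psiS w}"
    proof -
      have "inv_into f psiS ` (g - {w}) = inv_into f psiS ` g - inv_into f psiS ` {w}"
        using ib w by (intro inj_on_image_set_diff) (auto simp: bij_betw_def)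
      also have "inv_into f psiS ` g = f" using ib by (simp add: bij_betw_def)
      finally show ?thesis by simp
    qed
    finally have "\<iota> ` (g - {w}) = f - {inv_into f psiS w}" .
    moreover have "\<iota> b = b" unfolding \<iota>_def using b by auto
    ultimately show ?thesis using e by auto
  qed
  have "(\<lambda>h. \<iota> ` h) ` (simplex_bd W - {g}) = (\<lambda>x. insert b (f - {x})) ` f"
  proof -
    have "(\<lambda>h. \<iota> ` h) ` (simplex_bd W - {g}) = (\<lambda>w. insert b (f - {inv_into f psiS w})) ` g"
      unfolding Sg image_image by (rule image_cong[OF refl]) (use img in simp)
    also have "\<dots> = (\<lambda>x. insert b (f - {x})) ` (inv_into f psiS ` g)" by (simp add: image_image)
    also have "inv_into f psiS ` g = f" using ib by (simp add: bij_betw_def)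
    finally show ?thesis .
  qed
  then have "G = (cross_facets V s - {f}) \<union> (\<lambda>x. insert b (f - {x})) ` f"
    unfolding G consum_def \<iota>_def by simp
  then show ?thesis using cd fC bV bs by blast
qed




lemma step_struct:
  assumes cp: "is_cplus d G b bs" and ok: "consum_ok F G f1 bs psi" and d1: "d \<ge> 1"
  shows "\<exists>P \<mu>. finite P \<and> card P = d+1 \<and> b \<notin> P \<and> P \<inter> vertices F = {} \<and> b \<notin> vertices F \<and>
     bij_betw \<mu> P f1 \<and>
     consum F G f1 bs psi = (F - {f1}) \<union> (\<lambda>B. B \<union> \<mu>`(P-B)) ` {B. B \<subseteq> P \<and> B \<noteq> {} \<and> B \<noteq> P}
        \<union> (\<lambda>x. insert b (P - {x})) ` P"
proof -
  obtain V s f where cd: "is_cross_data d V s" and fC: "f \<in> cross_facets V s" and bV: "b \<notin> V"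
    and bs: "bs = s`f" and G: "G = (cross_facets V s - {f}) \<union> (\<lambda>x. insert b (f - {x})) ` f"
    using cplus_struct[OF cp d1] by blast
  note cb = cross_basic[OF cd fC]
  have disj: "vertices F \<inter> vertices G = {}" and f1F: "f1 \<in> F" and psi: "bij_betw psi f1 bs"
    using ok unfolding consum_ok_def by auto
  have f2: "card f \<ge> 2" using cb(5) d1 by auto
  have other: "\<exists>x\<in>f. x \<noteq> v" for v
  proof (rule ccontr)
    assume "\<not> (\<exists>x\<in>f. x \<noteq> v)" then have "f \<subseteq> {v}" by auto
    then have "card f \<le> card {v}" by (intro card_mono) auto
    then show False using f2 by simp
  qed
  have bG: "insert b f \<subseteq> vertices G"
  proof
    fix v assume v: "v \<in> insert b f"
    show "v \<in> vertices G"
    proof (cases "v = b")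
      case True
      obtain x where "x \<in> f" using f2 by fastforce
      then have "insert b (f - {x}) \<in> G" using G by auto
      then show ?thesis using True unfolding vertices_def by blast
    next
      case False
      then have vf: "v \<in> f" using v by auto
      obtain x where x: "x \<in> f" "x \<noteq> v" using other by blast
      then have "insert b (f - {x}) \<in> G" using G by auto
      then show ?thesis using vf x unfolding vertices_def by blast
    qed
  qed
  have bF: "b \<notin> vertices F" and fF: "f \<inter> vertices F = {}" using bG disj by auto
  define \<phi> where "\<phi> = inv_into f1 psi"
  have phib: "bij_betw \<phi> (s`f) f1" unfolding \<phi>_def using psi bs by (metis bij_betw_inv_into)
  have sb: "bij_betw s f (s`f)" using cb(4) cb(1) by (meson inj_on_imp_bij_betw inj_on_subset)
  define \<mu> where "\<mu> = \<phi> \<circ> s"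
  have mub: "bij_betw \<mu> f f1" unfolding \<mu>_def using bij_betw_trans[OF sb phib] .
  define \<iota> where "\<iota> = (\<lambda>v. if v \<in> bs then inv_into f1 psi v else v)"
  have bsC: "s`f \<in> cross_facets V s" using cb(7) .
  have Gm: "G - {bs} = (cross_facets V s - {f, s`f}) \<union> (\<lambda>x. insert b (f - {x})) ` f"
  proof -
    have "s`f \<notin> (\<lambda>x. insert b (f - {x})) ` f" using bV cb(3) by auto
    then show ?thesis unfolding G bs by auto
  qed
  have iC: "(\<lambda>h. \<iota> ` h) ` ((\<lambda>x. insert b (f - {x})) ` f) = (\<lambda>x. insert b (f - {x})) ` f"
  proof -
    have "\<iota> ` (insert b (f - {x})) = insert b (f - {x})" for x
    proof -
      have "\<forall>v \<in> insert b (f - {x}). \<iota> v = v" unfolding \<iota>_def bs using cb(2) bV cb(3) by auto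
      then show ?thesis by (simp add: image_cong)
    qed
    then show ?thesis by (simp add: image_image)
  qed
  have iB: "(\<lambda>h. \<iota> ` h) ` (cross_facets V s - {f, s`f}) = (\<lambda>B. B \<union> \<mu>`(f-B)) ` {B. B \<subseteq> f \<and> B \<noteq> {} \<and> B \<noteq> f}"
  proof -
    have "\<iota> ` (B \<union> s`(f-B)) = B \<union> \<mu>`(f-B)" if "B \<subseteq> f" for B
    proof -
      have "\<iota> ` B = B" using that cb(2) unfolding \<iota>_def bs by auto
      moreover have "\<iota> ` (s`(f-B)) = \<mu>`(f-B)" unfolding \<iota>_def \<mu>_def \<phi>_def bs by auto
      ultimately show ?thesis by (simp add: image_Un)
    qed
    then show ?thesis unfolding cross_decomp[OF cd fC] image_image
      by (intro image_cong) auto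
  qed
  have "consum F G f1 bs psi = (F - {f1}) \<union> (\<lambda>B. B \<union> \<mu>`(f-B)) ` {B. B \<subseteq> f \<and> B \<noteq> {} \<and> B \<noteq> f}
        \<union> (\<lambda>x. insert b (f - {x})) ` f"
    unfolding consum_def Gm image_Un iB[unfolded \<iota>_def] iC[unfolded \<iota>_def] by auto
  moreover have "b \<notin> f" using bV cb(1) by auto
  ultimately show ?thesis using cb(6) cb(5) fF bF mub by blast
qed




definition Inv :: "nat \<Rightarrow> nat \<Rightarrow> 'v set set \<Rightarrow> 'v \<Rightarrow> bool" where
  "Inv d k F a \<longleftrightarrow> finite (vertices F) \<and> card (vertices F) = k*(d+2) \<and>
    (\<forall>T. is_transversal F T \<and> finite T \<longrightarrow> 2*k \<le> card T) \<and>
    (\<exists>T. is_transversal F T \<and> finite T \<and> card T = 2*k \<and> a \<in> T) \<and>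
    (\<forall>T. is_transversal F T \<and> finite T \<and> (\<exists>f\<in>F. a\<in>f \<and> f \<subseteq> T) \<longrightarrow> 2*k+1 \<le> card T)"

lemma comb_step:
  fixes F :: "'v set set"
  assumes inv: "Inv d k F a" and d: "d \<ge> 2" and f1: "f1 \<in> F" "a \<in> f1"
    and P: "finite P" "card P = d+1" "b \<notin> P" "P \<inter> vertices F = {}" "b \<notin> vertices F"
    and mu: "bij_betw \<mu> P f1"
    and F': "F' = (F - {f1}) \<union> (\<lambda>B. B \<union> \<mu>`(P-B)) ` {B. B \<subseteq> P \<and> B \<noteq> {} \<and> B \<noteq> P}
        \<union> (\<lambda>x. insert b (P - {x})) ` P"
  shows "Inv d (Suc k) F' b"
proof -
  define U where "U = vertices F"
  have finU: "finite U" and cardU: "card U = k*(d+2)"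
    and lb: "\<And>T. is_transversal F T \<Longrightarrow> finite T \<Longrightarrow> 2*k \<le> card T"
    and ex: "\<exists>T. is_transversal F T \<and> finite T \<and> card T = 2*k \<and> a \<in> T"
    and lb3: "\<And>T f. is_transversal F T \<Longrightarrow> finite T \<Longrightarrow> f \<in> F \<Longrightarrow> a \<in> f \<Longrightarrow> f \<subseteq> T \<Longrightarrow> 2*k+1 \<le> card T"
    using inv unfolding Inv_def U_def by blast+
  have f1U: "f1 \<subseteq> U" using f1 unfolding U_def vertices_def by auto
  have PU: "P \<inter> U = {}" "b \<notin> U" using P unfolding U_def by auto
  have muimg: "\<mu> ` P = f1" using mu by (simp add: bij_betw_def)
  have muinj: "inj_on \<mu> P" using mu by (simp add: bij_betw_def)
  have other: "\<exists>q\<in>P. q \<noteq> p" for p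
  proof (rule ccontr)
    assume "\<not> (\<exists>q\<in>P. q \<noteq> p)" then have "P \<subseteq> {p}" by auto
    then have "card P \<le> card {p}" by (intro card_mono) auto
    then show False using P d by simp
  qed
  have Pne: "P \<noteq> {}" using P d by auto
  have Bsing: "insert p (\<mu>`(P-{p})) \<in> F'" if p: "p \<in> P" for p
  proof -
    obtain q where "q \<in> P" "q \<noteq> p" using other by blast
    then have "{p} \<noteq> P" by auto
    then have "{p} \<in> {B. B \<subseteq> P \<and> B \<noteq> {} \<and> B \<noteq> P}" using p by auto
    then have "{p} \<union> \<mu>`(P-{p}) \<in> F'" unfolding F' by blast
    then show ?thesis by simp
  qed
  have Bco: "insert (\<mu> p) (P - {p}) \<in> F'" if p: "p \<in> P" for p
  proof -
    obtain q where "q \<in> P" "q \<noteq> p" using other by blast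
    then have "P - {p} \<in> {B. B \<subseteq> P \<and> B \<noteq> {} \<and> B \<noteq> P}" using p by auto
    then have "(P - {p}) \<union> \<mu>`(P - (P - {p})) \<in> F'" unfolding F' by blast
    moreover have "P - (P - {p}) = {p}" using p by auto
    ultimately show ?thesis by simp
  qed
  have Cmem: "insert b (P - {x}) \<in> F'" if "x \<in> P" for x using that unfolding F' by blast
  have Amem: "e \<in> F'" if "e \<in> F" "e \<noteq> f1" for e using that unfolding F' by blast
  have vert: "vertices F' = U \<union> P \<union> {b}"
  proof
    show "vertices F' \<subseteq> U \<union> P \<union> {b}"
    proof
      fix v assume "v \<in> vertices F'"
      then obtain e where e: "e \<in> F'" "v \<in> e" unfolding vertices_def by auto
      show "v \<in> U \<union> P \<union> {b}"
        using e f1U muimg unfolding F' U_def vertices_def by auto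
    qed
    show "U \<union> P \<union> {b} \<subseteq> vertices F'"
    proof
      fix v assume v: "v \<in> U \<union> P \<union> {b}"
      show "v \<in> vertices F'"
      proof (cases "v \<in> U")
        case True
        then obtain e where e: "e \<in> F" "v \<in> e" unfolding U_def vertices_def by auto
        show ?thesis
        proof (cases "e = f1")
          case False then show ?thesis using Amem e unfolding vertices_def by blast
        next
          case True
          then obtain p where p: "p \<in> P" "v = \<mu> p" using e muimg by auto
          obtain q where q: "q \<in> P" "q \<noteq> p" using other by blast
          have "v \<in> insert q (\<mu>`(P-{q}))" using p q by auto
          then show ?thesis using Bsing[OF q(1)] unfolding vertices_def by blast
        qed
      next
        case False
        then have "v \<in> P \<or> v = b" using v by auto
        then show ?thesis
        proof
          assume "v \<in> P" then show ?thesis using Bsing unfolding vertices_def by blast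
        next
          assume vb: "v = b"
          obtain x where "x \<in> P" using Pne by auto
          then show ?thesis using Cmem vb unfolding vertices_def by blast
        qed
      qed
    qed
  qed
  have finV': "finite (vertices F')" using vert finU P by auto
  have restr: "is_transversal F (T \<inter> U)" if T: "is_transversal F' T" "T \<inter> f1 \<noteq> {}" for T
    unfolding is_transversal_def
  proof (intro conjI ballI)
    show "T \<inter> U \<subseteq> vertices F" unfolding U_def by auto
    fix e assume e: "e \<in> F"
    have eU: "e \<subseteq> U" using e unfolding U_def vertices_def by auto
    show "T \<inter> U \<inter> e \<noteq> {}"
    proof (cases "e = f1")
      case True then show ?thesis using T f1U by auto
    next
      case False then have "T \<inter> e \<noteq> {}" using T Amem e unfolding is_transversal_def by blast
      then show ?thesis using eU by auto
    qed
  qed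
  have restra: "is_transversal F (insert a (T \<inter> U))" if T: "is_transversal F' T" for T
    unfolding is_transversal_def
  proof (intro conjI ballI)
    show "insert a (T \<inter> U) \<subseteq> vertices F" using f1U f1 unfolding U_def by auto
    fix e assume e: "e \<in> F"
    have eU: "e \<subseteq> U" using e unfolding U_def vertices_def by auto
    show "insert a (T \<inter> U) \<inter> e \<noteq> {}"
    proof (cases "e = f1")
      case True then show ?thesis using f1 by auto
    next
      case False then have "T \<inter> e \<noteq> {}" using T Amem e unfolding is_transversal_def by blast
      then show ?thesis using eU by auto
    qed
  qed
  have split: "card T = card (T \<inter> U) + card (T \<inter> P) + (if b \<in> T then 1 else 0)"
    if T: "T \<subseteq> vertices F'" for T
  proof -
    have fT: "finite T" using T finV' finite_subset by auto
    have e: "T = (T \<inter> U) \<union> ((T \<inter> P) \<union> (T \<inter> {b}))" using T vert by auto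
    have "card T = card (T \<inter> U) + card ((T \<inter> P) \<union> (T \<inter> {b}))"
      by (subst e, rule card_Un_disjoint) (use fT PU in auto)
    also have "card ((T \<inter> P) \<union> (T \<inter> {b})) = card (T \<inter> P) + card (T \<inter> {b})"
      by (rule card_Un_disjoint) (use fT P in auto)
    also have "card (T \<inter> {b}) = (if b \<in> T then 1 else 0)" by auto
    finally show ?thesis by simp
  qed
  have cnt_ins: "card (insert a (T \<inter> U)) \<le> card (T \<inter> U) + 1" for T
    using finU by (metis card_insert_le_m1 card_insert_if finite_Int le_add1 le_refl add.commute plus_1_eq_Suc)
  have Psub: "P \<subseteq> T" if T: "is_transversal F' T" "T \<inter> f1 = {}" for T
  proof
    fix q assume q: "q \<in> P"
    have "T \<inter> insert q (\<mu>`(P-{q})) \<noteq> {}" using T Bsing[OF q] unfolding is_transversal_def by blast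
    moreover have "\<mu>`(P-{q}) \<subseteq> f1" using muimg by auto
    ultimately show "q \<in> T" using T by auto
  qed
  have cardP: "card (T \<inter> P) = d+1" if "P \<subseteq> T" for T using that P by (simp add: Int_absorb1)
  have LB: "2 * Suc k \<le> card T" if T: "is_transversal F' T" for T
  proof -
    have TV: "T \<subseteq> vertices F'" using T unfolding is_transversal_def by auto
    note sp = split[OF TV]
    show ?thesis
    proof (cases "T \<inter> P = {}")
      case True
      have f1T: "f1 \<subseteq> T"
      proof
        fix y assume "y \<in> f1"
        then obtain p where p: "p \<in> P" "y = \<mu> p" using muimg by auto
        have "T \<inter> insert (\<mu> p) (P - {p}) \<noteq> {}" using T Bco[OF p(1)] unfolding is_transversal_def by blast
        then show "y \<in> T" using True p by auto
      qed
      obtain x where x: "x \<in> P" using Pne by auto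
      have "T \<inter> insert b (P - {x}) \<noteq> {}" using T Cmem[OF x] unfolding is_transversal_def by blast
      then have bT: "b \<in> T" using True by auto
      have "T \<inter> f1 \<noteq> {}" using f1T f1 by auto
      then have "2*k+1 \<le> card (T \<inter> U)" using lb3[OF restr[OF T] _ f1] f1T f1U finU by auto
      then show ?thesis using sp bT by auto
    next
      case False
      then obtain p where p: "p \<in> T" "p \<in> P" by auto
      show ?thesis
      proof (cases "T \<inter> f1 = {}")
        case True
        have "P \<subseteq> T" using Psub T True by auto
        then have "card (T \<inter> P) = d+1" using cardP by auto
        moreover have "2*k \<le> card (insert a (T \<inter> U))" using lb[OF restra[OF T]] finU by auto
        ultimately show ?thesis using sp cnt_ins[of T] d by auto
      next
        case False
        have k: "2*k \<le> card (T \<inter> U)" using lb[OF restr[OF T False]] finU by auto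
        have "card (T \<inter> P) + (if b \<in> T then 1 else 0) \<ge> 2"
        proof (cases "b \<in> T")
          case True
          have "card (T \<inter> P) \<ge> 1" using p P by (metis IntI card_0_eq finite_Int empty_iff less_one not_le)
          then show ?thesis using True by auto
        next
          case bF: False
          have "T \<inter> insert b (P - {p}) \<noteq> {}" using T Cmem[OF p(2)] unfolding is_transversal_def by blast
          then obtain q where q: "q \<in> T" "q \<in> P" "q \<noteq> p" using bF by auto
          have "{p, q} \<subseteq> T \<inter> P" using p q by auto
          then have "card {p,q} \<le> card (T \<inter> P)" using P by (intro card_mono) auto
          then show ?thesis using q by auto
        qed
        then show ?thesis using sp k by auto
      qed
    qed
  qed
  obtain T0 where T0: "is_transversal F T0" "finite T0" "card T0 = 2*k" "a \<in> T0" using ex by blast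
  obtain p where p: "p \<in> P" "\<mu> p = a" using muimg f1 by auto
  define T where "T = insert b (insert p T0)"
  have T0U: "T0 \<subseteq> U" using T0 unfolding is_transversal_def U_def by auto
  have Ttr: "is_transversal F' T"
    unfolding is_transversal_def
  proof (intro conjI ballI)
    show "T \<subseteq> vertices F'" unfolding T_def vert using T0U p by auto
    fix e assume "e \<in> F'"
    then consider (A) "e \<in> F" "e \<noteq> f1" | (B) B where "B \<subseteq> P" "e = B \<union> \<mu>`(P-B)"
      | (C) x where "e = insert b (P - {x})" unfolding F' by blast
    then show "T \<inter> e \<noteq> {}"
    proof cases
      case A then show ?thesis using T0 unfolding is_transversal_def T_def by blast
    next
      case (B B)
      show ?thesis
      proof (cases "p \<in> B")
        case True then show ?thesis using B unfolding T_def by auto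
      next
        case False then have "a \<in> e" using B p by auto
        then show ?thesis using T0 unfolding T_def by auto
      qed
    next
      case C then show ?thesis unfolding T_def by auto
    qed
  qed
  have "card T = 2 * Suc k"
  proof -
    have "p \<notin> T0" using T0U PU p by auto
    moreover have "b \<notin> insert p T0" using T0U PU P p by auto
    ultimately show ?thesis unfolding T_def using T0 by simp
  qed
  then have EX: "\<exists>T. is_transversal F' T \<and> finite T \<and> card T = 2*Suc k \<and> b \<in> T"
    using Ttr T0 unfolding T_def by auto
  have L3: "2 * Suc k + 1 \<le> card T" if T: "is_transversal F' T" and e: "e \<in> F'" "b \<in> e" "e \<subseteq> T" for T e
  proof -
    have TV: "T \<subseteq> vertices F'" using T unfolding is_transversal_def by auto
    note sp = split[OF TV]
    have "\<exists>x\<in>P. e = insert b (P - {x})"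
    proof -
      have "e \<notin> F - {f1}" using e PU unfolding U_def vertices_def by auto
      moreover have "e \<notin> (\<lambda>B. B \<union> \<mu>`(P-B)) ` {B. B \<subseteq> P \<and> B \<noteq> {} \<and> B \<noteq> P}"
        using e P f1U PU muimg by auto
      ultimately show ?thesis using e unfolding F' by blast
    qed
    then obtain x where x: "x \<in> P" "e = insert b (P - {x})" by blast
    have bT: "b \<in> T" using e x by auto
    have "P - {x} \<subseteq> T \<inter> P" using e x by auto
    then have "card (P - {x}) \<le> card (T \<inter> P)" using P by (intro card_mono) auto
    then have cP: "d \<le> card (T \<inter> P)" using P x by auto
    show ?thesis
    proof (cases "T \<inter> f1 = {}")
      case True
      have "P \<subseteq> T" using Psub T True by auto
      then have "card (T \<inter> P) = d+1" using cardP by auto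
      moreover have "2*k \<le> card (insert a (T \<inter> U))" using lb[OF restra[OF T]] finU by auto
      ultimately show ?thesis using sp cnt_ins[of T] d bT by auto
    next
      case False
      have k: "2*k \<le> card (T \<inter> U)" using lb[OF restr[OF T False]] finU by auto
      then show ?thesis using sp cP bT d by auto
    qed
  qed
  have cardV: "card (vertices F') = Suc k * (d+2)"
  proof -
    have "card (U \<union> P) = card U + card P" using finU P PU by (intro card_Un_disjoint) auto
    moreover have "card (U \<union> P \<union> {b}) = card (U \<union> P) + 1"
      using finU P PU by simp
    ultimately have "card (U \<union> P \<union> {b}) = card U + card P + 1" by simp
    then show ?thesis using vert cardU P by simp
  qed
  show ?thesis unfolding Inv_def
    using finV' cardV LB EX L3 by blast
qed




lemma base_inv:
  assumes W: "finite W" "card W = d + 2" "a \<in> W" and d: "d \<ge> 2"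
  shows "Inv d 1 (simplex_bd W) a"
proof -
  have VW: "vertices (simplex_bd W) = W" by (rule simplex_vertices) (use W in auto)
  have mem: "W - {w} \<in> simplex_bd W" if "w \<in> W" for w using that unfolding simplex_bd_def by auto
  have LB: "2 \<le> card T" if T: "is_transversal (simplex_bd W) T" for T
  proof (rule ccontr)
    assume "\<not> 2 \<le> card T"
    then have c: "card T \<le> Suc 0" by auto
    have TW: "T \<subseteq> W" using T VW unfolding is_transversal_def by auto
    then have fT: "finite T" using W finite_subset by auto
    have "T \<inter> (W - {a}) \<noteq> {}" using T mem[OF W(3)] unfolding is_transversal_def by blast
    then obtain t where t: "t \<in> T" by auto
    have "\<forall>u\<in>T. u = t" using c fT t by (auto simp: card_le_Suc0_iff_eq)
    moreover have "T \<inter> (W - {t}) \<noteq> {}" using T mem TW t unfolding is_transversal_def by blast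
    ultimately show False by auto
  qed
  have "W - {a} \<noteq> {}"
  proof
    assume "W - {a} = {}" then have "W \<subseteq> {a}" by auto
    then have "card W \<le> card {a}" by (intro card_mono) auto
    then show False using W by simp
  qed
  then obtain w where w: "w \<in> W" "w \<noteq> a" by auto
  have EX: "is_transversal (simplex_bd W) {a, w}"
    unfolding is_transversal_def VW
  proof (intro conjI ballI)
    show "{a, w} \<subseteq> W" using W w by simp
    fix e assume "e \<in> simplex_bd W"
    then obtain x where x: "x \<in> W" "e = W - {x}" unfolding simplex_bd_def by blast
    show "{a, w} \<inter> e \<noteq> {}"
    proof (cases "x = a")
      case True then have "w \<in> e" using x w by simp
      then show ?thesis by blast
    next
      case False then have "a \<in> e" using x W by simp
      then show ?thesis by blast
    qed
  qed
  have cw: "card {a, w} = 2" using w by simp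
  have L3: "3 \<le> card T" if T: "is_transversal (simplex_bd W) T" and e: "e \<in> simplex_bd W" "e \<subseteq> T" for T e
  proof -
    obtain x where x: "x \<in> W" "e = W - {x}" using e unfolding simplex_bd_def by blast
    have TW: "T \<subseteq> W" using T VW unfolding is_transversal_def by auto
    then have fT: "finite T" using W finite_subset by auto
    have "card e = d + 1" using x W by simp
    moreover have "card e \<le> card T" using e fT by (intro card_mono) auto
    ultimately show ?thesis using d by auto
  qed
  have i1: "finite W" "card W = 1 * (d+2)" using W by auto
  have i2: "\<forall>T. is_transversal (simplex_bd W) T \<and> finite T \<longrightarrow> 2*1 \<le> card T" using LB by simp
  have i3: "\<exists>T. is_transversal (simplex_bd W) T \<and> finite T \<and> card T = 2*1 \<and> a \<in> T"
    using EX cw by (intro exI[of _ "{a,w}"]) simp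
  have i4: "\<forall>T. is_transversal (simplex_bd W) T \<and> finite T \<and> (\<exists>f\<in>simplex_bd W. a\<in>f \<and> f \<subseteq> T) \<longrightarrow> 2*1+1 \<le> card T"
  proof (intro allI impI)
    fix T assume "is_transversal (simplex_bd W) T \<and> finite T \<and> (\<exists>f\<in>simplex_bd W. a\<in>f \<and> f \<subseteq> T)"
    then obtain f where "is_transversal (simplex_bd W) T" "f \<in> simplex_bd W" "f \<subseteq> T" by blast
    then have "3 \<le> card T" by (rule L3)
    then show "2*1+1 \<le> card T" by simp
  qed
  show ?thesis unfolding Inv_def VW
    by (intro conjI i1 i2 i3 i4)
qed

lemma X_inv:
  assumes "is_X d k F a" "d \<ge> 2"
  shows "Inv d k F a"
  using assms
proof (induction rule: is_X.induct)
  case (base W d a)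
  show ?case by (rule base_inv[OF base.hyps base.prems])
next
  case (step d k F a G b bs f psi)
  have IH: "Inv d k F a" using step.IH step.prems by simp
  have d1: "1 \<le> d" using step.prems by simp
  obtain P \<mu> where H: "finite P \<and> card P = d+1 \<and> b \<notin> P \<and> P \<inter> vertices F = {} \<and> b \<notin> vertices F \<and>
     bij_betw \<mu> P f \<and>
     consum F G f bs psi = (F - {f}) \<union> (\<lambda>B. B \<union> \<mu>`(P-B)) ` {B. B \<subseteq> P \<and> B \<noteq> {} \<and> B \<noteq> P}
        \<union> (\<lambda>x. insert b (P - {x})) ` P"
    using step_struct[OF step.hyps(2) step.hyps(3) d1] by (elim exE) (rule that)
  have fF: "f \<in> F" using step.hyps(3) unfolding consum_ok_def by simp
  show ?case
    by (rule comb_step[OF IH step.prems fF step.hyps(4)]) (use H in \<open>simp_all only: not_False_eq_True\<close>)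
qed

theorem mainTheorem14:
  fixes d k :: nat and F :: "'v set set" and a :: 'v
  assumes "d \<ge> 2" and "k \<ge> 1" and "is_X d k F a"
  shows "card (vertices F) = k * (d + 2) \<and> tau F = 2 * k \<and>
         (\<forall>T. is_transversal F T \<and> finite T \<and> card T = 2 * k \<longrightarrow>
              \<not> (\<exists>f\<in>F. a \<in> f \<and> f \<subseteq> T))"
proof -
  have I: "Inv d k F a" by (rule X_inv[OF assms(3) assms(1)])
  have c: "card (vertices F) = k * (d + 2)" using I unfolding Inv_def by auto
  have lb: "\<And>T. is_transversal F T \<Longrightarrow> finite T \<Longrightarrow> 2*k \<le> card T"
    and ex: "\<exists>T. is_transversal F T \<and> finite T \<and> card T = 2*k \<and> a \<in> T"
    and lb3: "\<And>T. is_transversal F T \<Longrightarrow> finite T \<Longrightarrow> (\<exists>f\<in>F. a\<in>f \<and> f \<subseteq> T) \<Longrightarrow> 2*k+1 \<le> card T"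
    using I unfolding Inv_def by blast+
  have t: "tau F = 2 * k"
    unfolding tau_def
  proof (rule Least_equality)
    show "\<exists>T. finite T \<and> card T = 2 * k \<and> is_transversal F T" using ex by blast
    fix n assume "\<exists>T. finite T \<and> card T = n \<and> is_transversal F T"
    then show "2 * k \<le> n" using lb by blast
  qed
  have "\<forall>T. is_transversal F T \<and> finite T \<and> card T = 2 * k \<longrightarrow>
              \<not> (\<exists>f\<in>F. a \<in> f \<and> f \<subseteq> T)"
  proof (intro allI impI notI)
    fix T assume T: "is_transversal F T \<and> finite T \<and> card T = 2 * k" and "\<exists>f\<in>F. a \<in> f \<and> f \<subseteq> T"
    then have "2*k+1 \<le> card T" using lb3 by blast
    then show False using T by simp
  qed
  then show ?thesis using c t by blast
qed


end
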